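(* Suppose $\gamma=1$, i.e. $\delta=\lambda$. Then for $z\in[0,1)$, $$\mathbb{E}[z^B]=\left(\frac{1-\xi}{1-\xi/N}\right)^{N\mu/\xi}=(1-\phi y)^{\theta\frac{1-y}{y}},$$ where $\xi=\frac{q-z}{1-z}$, $y=\frac{z-q}{1-q}$, $\phi=1-\frac1N$ and $\theta=N\mu$. For $q=0$ the expression at $y=0$ is interpreted by continuity. In particular, if $q>0$, $$\mathbb{P}(B=0)=\left(1+\frac{q\phi}{1-q}\right)^{-\theta/q}.$$
   Context: Model: fix $\delta>0$, $\nu>0$ and $\alpha>\beta\ge 0$, and put $\lambda=\alpha-\beta>0$. The wild-type population is deterministic, of size $e^{\delta t}$ at time $t\ge0$. Mutants arise at the points of an inhomogeneous Poisson process on $[0,\infty)$ with intensity $\nu e^{\delta t}$. Each mutant arising at time $s$ founds a clone that evolves as a linear birth–death process started from one cell, with per-capita birth rate $\alpha$ and death rate $\beta$. Clones are independent of each other and of the Poisson process. For $N>1$ let $\tau=\log N/\delta$, and let $B$ be the total number of mutant cells alive at time $\tau$. Notation: $q=\beta/\alpha\in[0,1)$, $\gamma=\delta/\lambda$, $\mu=\nu/\alpha$. *)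

theory Defs
  imports "HOL-Analysis.Analysis"
begin

text \<open>Transition law of a linear birth-death process (birth rate a, death rate b,
  a > b >= 0) started from one cell: probability of n cells alive at time t
  (Kendall's classical formula).\<close>
definition bd_pmf :: "real \<Rightarrow> real \<Rightarrow> real \<Rightarrow> nat \<Rightarrow> real" where
  "bd_pmf a b t n =
     (let E = exp ((a - b) * t);
          p0 = b * (E - 1) / (a * E - b);
          eta = a * (E - 1) / (a * E - b)
      in if n = 0 then p0 else (1 - p0) * (1 - eta) * eta ^ (n - 1))"

text \<open>Intensity (mean number) of mutant clones founded in [0,tau] that have exactly
  n cells at time tau: integral of the mutation intensity nu e^(delta s) times the
  probability that a clone born at s has n cells at tau.\<close>
definition clone_intensity :: "real \<Rightarrow> real \<Rightarrow> real \<Rightarrow> real \<Rightarrow> real \<Rightarrow> nat \<Rightarrow> real" where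
  "clone_intensity \<delta> \<nu> a b tau n =
     integral {0..tau} (\<lambda>s. \<nu> * exp (\<delta> * s) * bd_pmf a b (tau - s) n)"

fun conv_pow :: "(nat \<Rightarrow> real) \<Rightarrow> nat \<Rightarrow> nat \<Rightarrow> real" where
  "conv_pow c 0 m = (if m = 0 then 1 else 0)"
| "conv_pow c (Suc k) m = (\<Sum>j\<le>m. c j * conv_pow c k (m - j))"

text \<open>The number of
  mutations in [0,tau] is Poisson with mean Lambda = integral of nu e^(delta s);
  given k mutations, the founding times are iid with density nu e^(delta s)/Lambda,
  and clones are independent, so
  P(B = m) = sum_k e^(-Lambda) Lambda^k / k! * r^{*k}(m) with r = c / Lambda, i.e.
  P(B = m) = sum_k e^(-Lambda) / k! * c^{*k}(m).\<close>
definition B_pmf :: "real \<Rightarrow> real \<Rightarrow> real \<Rightarrow> real \<Rightarrow> real \<Rightarrow> nat \<Rightarrow> real" where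
  "B_pmf \<delta> \<nu> a b N m =
     (let tau = ln N / \<delta>;
          Lam = integral {0..tau} (\<lambda>s. \<nu> * exp (\<delta> * s))
      in (\<Sum>k. exp (- Lam) / fact k * conv_pow (clone_intensity \<delta> \<nu> a b tau) k m))"

definition B_pgf :: "real \<Rightarrow> real \<Rightarrow> real \<Rightarrow> real \<Rightarrow> real \<Rightarrow> real \<Rightarrow> real" where
  "B_pgf \<delta> \<nu> a b N z = (\<Sum>m. B_pmf \<delta> \<nu> a b N m * z ^ m)"

end

theory Submission
  imports Defs
begin

definition Gf :: "real \<Rightarrow> real \<Rightarrow> real \<Rightarrow> real \<Rightarrow> real" where
  "Gf a b t z = 1 - (a-b)/a * exp((a-b)*t) / (exp((a-b)*t) - (b/a - z)/(1-z))"

lemma alg: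
  fixes a b E z :: real
  assumes D: "a*E - b > 0" and M: "a*E*(1-z) - b + a*z > 0" and a0: "a > 0" and z1: "z < 1"
  shows "((1 - b*(E-1)/(a*E-b)) * (1 - a*(E-1)/(a*E-b)) * z) * (1/(1 - a*(E-1)/(a*E-b)*z)) + b*(E-1)/(a*E-b)
     = 1 - (a-b)/a * E / (E - (b/a - z)/(1-z))"
proof -
  define D where "D = a*E - b"
  define M where "M = a*E*(1-z) - b + a*z"
  have Dp: "D > 0" "D \<noteq> 0" using D D_def by auto
  have Mp: "M \<noteq> 0" using M M_def by auto
  have h1: "1 - b*(E-1)/(a*E-b) = (a-b)*E/D" using Dp unfolding D_def by (simp add: field_simps)
  have h2: "1 - a*(E-1)/(a*E-b) = (a-b)/D" using Dp unfolding D_def by (simp add: field_simps)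
  have h3: "1 - a*(E-1)/(a*E-b)*z = M/D" using Dp unfolding D_def M_def by (simp add: field_simps)
  have h4: "E - (b/a - z)/(1-z) = M/(a*(1-z))" using a0 z1 unfolding M_def by (simp add: field_simps)
  have "(a-b)*E/D * ((a-b)/D) * z * (1/(M/D)) + b*(E-1)/(a*E-b) = 1 - (a-b)/a * E / (M/(a*(1-z)))"
    using Dp Mp a0 z1 by (simp add: divide_simps) (simp add: D_def M_def algebra_simps)
  then show ?thesis by (simp only: h1 h2 h3 h4)
qed
lemma bd_basic:
  fixes a b t :: real
  assumes "a > b" "b \<ge> 0" "t \<ge> 0"
  shows "exp((a-b)*t) \<ge> 1" "a * exp((a-b)*t) - b > 0"
    "0 \<le> b * (exp((a-b)*t) - 1) / (a * exp((a-b)*t) - b)"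
    "b * (exp((a-b)*t) - 1) / (a * exp((a-b)*t) - b) < 1"
    "0 \<le> a * (exp((a-b)*t) - 1) / (a * exp((a-b)*t) - b)"
    "a * (exp((a-b)*t) - 1) / (a * exp((a-b)*t) - b) < 1"
proof -
  have "0 \<le> a - b" using assms by simp
  then have "0 \<le> (a-b)*t" using assms(3) by (rule mult_nonneg_nonneg)
  then show E: "exp((a-b)*t) \<ge> 1" by simp
  have "a * exp((a-b)*t) \<ge> a" using E assms by simp
  then show D: "a * exp((a-b)*t) - b > 0" using assms by linarith
  show "0 \<le> b * (exp((a-b)*t) - 1) / (a * exp((a-b)*t) - b)" using D E assms by simp
  show "b * (exp((a-b)*t) - 1) / (a * exp((a-b)*t) - b) < 1"
  proof -
    have "b * exp((a-b)*t) < a * exp((a-b)*t)" using assms by simp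
    then have "b * (exp((a-b)*t) - 1) < a * exp((a-b)*t) - b" by (simp add: algebra_simps)
    then show ?thesis using D by simp
  qed
  show "0 \<le> a * (exp((a-b)*t) - 1) / (a * exp((a-b)*t) - b)" using D E assms by simp
  have "a * (exp((a-b)*t) - 1) < a * exp((a-b)*t) - b" using assms by (simp add: algebra_simps)
  then show "a * (exp((a-b)*t) - 1) / (a * exp((a-b)*t) - b) < 1"
    using D by simp
qed

lemma bd_nonneg:
  assumes "a > b" "b \<ge> 0" "t \<ge> 0"
  shows "bd_pmf a b t n \<ge> 0"
  using bd_basic[OF assms] unfolding bd_pmf_def Let_def by auto

lemma bd_gen:
  assumes "a > b" "b \<ge> 0" "t \<ge> 0" "0 \<le> z" "z < 1"
  shows "(\<lambda>n. bd_pmf a b t n * z^n) sums Gf a b t z"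
proof -
  define E where "E = exp((a-b)*t)"
  define p0 where "p0 = b * (E - 1) / (a * E - b)"
  define eta where "eta = a * (E - 1) / (a * E - b)"
  note bb = bd_basic[OF assms(1-3), folded E_def, folded p0_def eta_def]
  have "eta * z \<le> eta * 1" using bb assms by (intro mult_left_mono) auto
  moreover have "eta * z \<ge> 0" using bb assms by simp
  ultimately have ez: "norm (eta * z) < 1" using bb by simp
  have "(\<lambda>n. ((1-p0)*(1-eta)*z) * (eta*z)^n) sums (((1-p0)*(1-eta)*z) * (1/(1-eta*z)))"
    by (rule sums_mult[OF geometric_sums[OF ez]])
  moreover have "(\<lambda>n. bd_pmf a b t (Suc n) * z^(Suc n)) = (\<lambda>n. ((1-p0)*(1-eta)*z) * (eta*z)^n)"
    unfolding bd_pmf_def Let_def E_def[symmetric] p0_def[symmetric] eta_def[symmetric]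
    by (rule ext) (simp add: power_mult_distrib)
  ultimately have "(\<lambda>n. bd_pmf a b t (Suc n) * z^(Suc n)) sums (((1-p0)*(1-eta)*z) * (1/(1-eta*z)))"
    by (simp only:)
  then have "(\<lambda>n. bd_pmf a b t n * z^n) sums (((1-p0)*(1-eta)*z) * (1/(1-eta*z)) + p0)"
    by (subst (asm) sums_Suc_iff) (simp add: bd_pmf_def Let_def E_def p0_def)
  moreover have "((1-p0)*(1-eta)*z) * (1/(1-eta*z)) + p0 = Gf a b t z"
  proof -
    have D: "a*E - b > 0" "E \<ge> 1" using bb by auto
    have d1: "1 - eta*z > 0" using ez by auto
    have d2: "1 - z > 0" using assms by auto
    have a0: "a > 0" using assms by auto
    have d3: "E - (b/a - z)/(1-z) > 0"
    proof -
      have "b/a < 1" using assms a0 by simp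
      then have "b/a - z < 1 - z" by simp
      then have "(b/a - z)/(1-z) < 1" using d2 by (simp add: pos_divide_less_eq)
      then show ?thesis using D by linarith
    qed
    have "a*(1-z)*(E - (b/a - z)/(1-z)) > 0" using d3 d2 a0 by simp
    moreover have "a*(1-z)*(E - (b/a - z)/(1-z)) = a*E*(1-z) - b + a*z"
      using d2 a0 by (simp add: field_simps)
    ultimately have d3': "a*E*(1-z) - b + a*z > 0" by simp
    show ?thesis unfolding Gf_def p0_def eta_def E_def[symmetric]
      by (rule alg) (use D d3' a0 d2 in auto)
  qed
  ultimately show ?thesis by simp
qed

lemma conv_pow_nonneg:
  assumes "\<And>j. c j \<ge> 0"
  shows "conv_pow c k m \<ge> 0"
  using assms by (induction k arbitrary: m) (auto intro!: sum_nonneg mult_nonneg_nonneg)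

lemma conv_pow_sums:
  assumes nn: "\<And>j. c j \<ge> 0" and z: "z \<ge> 0" and s: "(\<lambda>n. c n * z^n) sums C"
  shows "(\<lambda>m. conv_pow c k m * z^m) sums (C^k)"
proof (induction k)
  case 0
  have "(\<lambda>m. conv_pow c 0 m * z^m) = (\<lambda>m. if m = 0 then z^m else 0)" by auto
  then show ?case using sums_single[of 0 "\<lambda>m. z^m"] by simp
next
  case (Suc k)
  have sa: "summable (\<lambda>i. norm (c i * z^i))"
    using s nn z by (simp add: abs_mult sums_summable)
  have sb: "summable (\<lambda>i. norm (conv_pow c k i * z^i))"
    using Suc conv_pow_nonneg[OF nn] z by (simp add: abs_mult sums_summable)
  have "(\<lambda>m. \<Sum>i\<le>m. (c i * z^i) * (conv_pow c k (m-i) * z^(m-i))) sums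
        ((\<Sum>i. c i * z^i) * (\<Sum>i. conv_pow c k i * z^i))"
    by (rule Cauchy_product_sums[OF sa sb])
  moreover have "(\<Sum>i. c i * z^i) = C" using s by (simp add: sums_iff)
  moreover have "(\<Sum>i. conv_pow c k i * z^i) = C^k" using Suc by (simp add: sums_iff)
  moreover have "\<And>m. (\<Sum>i\<le>m. (c i * z^i) * (conv_pow c k (m-i) * z^(m-i))) = conv_pow c (Suc k) m * z^m"
  proof -
    fix m
    have eqi: "\<And>i. i \<in> {..m} \<Longrightarrow> (c i * z^i) * (conv_pow c k (m-i) * z^(m-i)) = (c i * conv_pow c k (m-i)) * z^m"
    proof -
      fix i assume "i \<in> {..m}"
      then have "z^i * z^(m-i) = z^m" by (simp add: power_add[symmetric])
      then show "(c i * z^i) * (conv_pow c k (m-i) * z^(m-i)) = (c i * conv_pow c k (m-i)) * z^m"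
        by (metis mult.assoc mult.left_commute)
    qed
    then show "(\<Sum>i\<le>m. (c i * z^i) * (conv_pow c k (m-i) * z^(m-i))) = conv_pow c (Suc k) m * z^m"
      by (subst sum.cong[OF refl eqi]) (auto simp: sum_distrib_right)
  qed
  ultimately show ?case by simp
qed

lemma nonneg_swap:
  fixes f :: "nat \<Rightarrow> nat \<Rightarrow> real"
  assumes nn: "\<And>k m. f k m \<ge> 0" and rows: "\<And>k. (\<lambda>m. f k m) sums g k" and tot: "g sums T"
    and cols: "\<And>m. summable (\<lambda>k. f k m)"
  shows "(\<lambda>m. \<Sum>k. f k m) sums T"
proof -
  have gs: "summable g" using tot by (simp add: sums_summable)
  have Sn: "\<And>m. (\<Sum>k. f k m) \<ge> 0" using nn cols by (simp add: suminf_nonneg)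
  have part: "\<And>M. (\<Sum>m<M. \<Sum>k. f k m) \<le> T"
  proof -
    fix M
    have "(\<Sum>m<M. \<Sum>k. f k m) = (\<Sum>k. \<Sum>m<M. f k m)"
      using cols by (simp add: suminf_sum)
    also have "\<dots> \<le> (\<Sum>k. g k)"
    proof (rule suminf_le)
      show "\<And>k. (\<Sum>m<M. f k m) \<le> g k"
        using rows nn by (metis sums_summable sums_unique sum_le_suminf finite_lessThan)
      show "summable (\<lambda>k. \<Sum>m<M. f k m)" using cols by (simp add: summable_sum)
      show "summable g" by (rule gs)
    qed
    also have "\<dots> = T" using tot by (simp add: sums_iff)
    finally show "(\<Sum>m<M. \<Sum>k. f k m) \<le> T" .
  qed
  have sS: "summable (\<lambda>m. \<Sum>k. f k m)"
    by (rule summableI_nonneg_bounded[where x=T]) (use Sn part in auto)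
  have "T \<le> (\<Sum>m. \<Sum>k. f k m)"
  proof -
    have "\<And>K. (\<Sum>k<K. g k) \<le> (\<Sum>m. \<Sum>k. f k m)"
    proof -
      fix K
      have "(\<Sum>k<K. g k) = (\<Sum>k<K. \<Sum>m. f k m)" using rows by (simp add: sums_iff)
      also have "\<dots> = (\<Sum>m. \<Sum>k<K. f k m)"
        using rows by (subst suminf_sum) (auto intro: sums_summable)
      also have "\<dots> \<le> (\<Sum>m. \<Sum>k. f k m)"
      proof (rule suminf_le)
        show "\<And>m. (\<Sum>k<K. f k m) \<le> (\<Sum>k. f k m)"
          using cols nn by (simp add: sum_le_suminf)
        show "summable (\<lambda>m. \<Sum>k<K. f k m)" by (rule summable_sum) (use rows in \<open>auto intro: sums_summable\<close>)
        show "summable (\<lambda>m. \<Sum>k. f k m)" by (rule sS)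
      qed
      finally show "(\<Sum>k<K. g k) \<le> (\<Sum>m. \<Sum>k. f k m)" .
    qed
    then have "suminf g \<le> (\<Sum>m. \<Sum>k. f k m)" by (rule suminf_le_const[OF gs])
    then show ?thesis using tot by (simp add: sums_iff)
  qed
  moreover have "(\<Sum>m. \<Sum>k. f k m) \<le> T" by (rule suminf_le_const[OF sS part])
  ultimately show ?thesis using sS by (simp add: sums_iff)
qed

lemma bd_cont:
  assumes "a > b" "b \<ge> 0"
  shows "continuous_on {0..tau} (\<lambda>s. \<nu> * exp (\<delta> * s) * bd_pmf a b (tau - s) n)"
proof -
  have nz: "\<forall>s\<in>{0..tau}. a * exp ((a-b) * (tau - s)) - b \<noteq> 0"
  proof
    fix s assume "s \<in> {0..tau}"
    then have "tau - s \<ge> 0" by simp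
    from bd_basic(2)[OF assms this] show "a * exp ((a-b) * (tau - s)) - b \<noteq> 0" by simp
  qed
  show ?thesis
    using nz by (cases n) (auto intro!: continuous_intros simp: bd_pmf_def Let_def)
qed

lemma Gf_le1:
  assumes "a > b" "b \<ge> 0" "t \<ge> 0" "0 \<le> z" "z < 1"
  shows "Gf a b t z \<le> 1"
proof -
  have E: "exp((a-b)*t) \<ge> 1" by (rule bd_basic(1)[OF assms(1-3)])
  have "b/a < 1" using assms by simp
  then have "b/a - z < 1 - z" by simp
  then have "(b/a - z)/(1-z) < 1" using assms by (simp add: pos_divide_less_eq)
  then have "exp((a-b)*t) - (b/a - z)/(1-z) > 0" using E by linarith
  then show ?thesis unfolding Gf_def using assms by simp
qed

lemma clone_sums:
  fixes \<delta> \<nu> a b tau z :: real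
  assumes "\<delta> \<ge> 0" "\<nu> \<ge> 0" "a > b" "b \<ge> 0" "tau \<ge> 0" "0 \<le> z" "z < 1"
  shows "(\<lambda>s. \<nu> * exp (\<delta> * s) * Gf a b (tau-s) z) integrable_on {0..tau}"
    and "(\<lambda>n. clone_intensity \<delta> \<nu> a b tau n * z^n) sums integral {0..tau} (\<lambda>s. \<nu> * exp (\<delta> * s) * Gf a b (tau-s) z)"
proof -
  define base where "base n s = \<nu> * exp (\<delta> * s) * bd_pmf a b (tau - s) n" for n s
  define h where "h n s = z^n * base n s" for n s
  define g where "g s = \<nu> * exp (\<delta> * s) * Gf a b (tau-s) z" for s
  define fk where "fk k s = (\<Sum>n<k. h n s)" for k s
  have bcont: "\<And>n. continuous_on {0..tau} (base n)" unfolding base_def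
    by (rule bd_cont) (use assms in auto)
  have bint: "\<And>n. base n integrable_on {0..tau}"
    by (rule integrable_continuous_interval[OF bcont])
  have hint: "\<And>n. h n integrable_on {0..tau}" unfolding h_def
    by (intro integrable_continuous_interval continuous_on_mult continuous_on_const bcont)
  have fint: "\<And>k. fk k integrable_on {0..tau}" unfolding fk_def
    by (intro Henstock_Kurzweil_Integration.integrable_sum) (auto intro: hint)
  have hs: "\<And>s. s \<in> {0..tau} \<Longrightarrow> (\<lambda>n. h n s) sums g s"
  proof -
    fix s assume "s \<in> {0..tau}"
    then have "tau - s \<ge> 0" by simp
    from sums_mult[OF bd_gen[OF assms(3,4) this assms(6,7)], of "\<nu> * exp (\<delta> * s)"]
    show "(\<lambda>n. h n s) sums g s" unfolding h_def base_def g_def by (simp add: mult_ac)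
  qed
  have hnn: "\<And>n s. s \<in> {0..tau} \<Longrightarrow> h n s \<ge> 0"
  proof -
    fix n s assume "s \<in> {0..tau}"
    then have "tau - s \<ge> 0" by simp
    then show "h n s \<ge> 0" unfolding h_def base_def
      using bd_nonneg[OF assms(3,4)] assms by (simp add: mult_nonneg_nonneg)
  qed
  have bound: "\<And>k s. s \<in> {0..tau} \<Longrightarrow> norm (fk k s) \<le> \<nu> * exp(\<delta>*tau)"
  proof -
    fix k s assume s: "s \<in> {0..tau}"
    have f0: "fk k s \<ge> 0" unfolding fk_def using hnn[OF s] by (simp add: sum_nonneg)
    have "fk k s \<le> (\<Sum>n. h n s)" unfolding fk_def
      using hs[OF s] hnn[OF s] by (intro sum_le_suminf) (auto simp: sums_summable)
    also have "\<dots> = g s" using hs[OF s] by (simp add: sums_iff)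
    also have "\<dots> \<le> \<nu> * exp (\<delta> * s) * 1" unfolding g_def
      using Gf_le1[OF assms(3,4) _ assms(6,7), of "tau - s"] s assms by (intro mult_left_mono) auto
    also have "\<dots> \<le> \<nu> * exp (\<delta> * tau)" using s assms by (simp add: mult_left_mono)
    finally show "norm (fk k s) \<le> \<nu> * exp(\<delta>*tau)" using f0 by simp
  qed
  have conv: "\<And>s. s \<in> {0..tau} \<Longrightarrow> (\<lambda>k. fk k s) \<longlonglongrightarrow> g s"
    using hs unfolding sums_def fk_def by simp
  have dc: "g integrable_on {0..tau}" "(\<lambda>k. integral {0..tau} (fk k)) \<longlonglongrightarrow> integral {0..tau} g"
    using dominated_convergence[of fk "{0..tau}" "\<lambda>x. \<nu> * exp (\<delta> * tau)" g] fint bound conv by auto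
  show "(\<lambda>s. \<nu> * exp (\<delta> * s) * Gf a b (tau-s) z) integrable_on {0..tau}" using dc(1) unfolding g_def .
  have "\<And>k. integral {0..tau} (fk k) = (\<Sum>n<k. clone_intensity \<delta> \<nu> a b tau n * z^n)"
  proof -
    fix k
    have "integral {0..tau} (fk k) = (\<Sum>n<k. integral {0..tau} (h n))" unfolding fk_def
      by (rule Henstock_Kurzweil_Integration.integral_sum) (auto intro: hint)
    also have "\<dots> = (\<Sum>n<k. clone_intensity \<delta> \<nu> a b tau n * z^n)"
    proof (rule sum.cong[OF refl])
      fix n
      have "integral {0..tau} (h n) = z^n * integral {0..tau} (base n)"
        unfolding h_def by (rule integral_mult[symmetric, OF bint])
      then show "integral {0..tau} (h n) = clone_intensity \<delta> \<nu> a b tau n * z^n"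
        unfolding clone_intensity_def base_def by simp
    qed
    finally show "integral {0..tau} (fk k) = (\<Sum>n<k. clone_intensity \<delta> \<nu> a b tau n * z^n)" .
  qed
  then show "(\<lambda>n. clone_intensity \<delta> \<nu> a b tau n * z^n) sums integral {0..tau} (\<lambda>s. \<nu> * exp (\<delta> * s) * Gf a b (tau-s) z)"
    using dc(2) unfolding sums_def g_def by simp
qed

lemma clone_nonneg:
  fixes \<delta> \<nu> a b tau :: real
  assumes "\<nu> \<ge> 0" "a > b" "b \<ge> 0"
  shows "clone_intensity \<delta> \<nu> a b tau n \<ge> 0"
proof (cases "tau \<ge> 0")
  case True
  show ?thesis unfolding clone_intensity_def
  proof (rule Henstock_Kurzweil_Integration.integral_nonneg)
    show "(\<lambda>s. \<nu> * exp (\<delta> * s) * bd_pmf a b (tau - s) n) integrable_on {0..tau}"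
      by (intro integrable_continuous_interval bd_cont) (use assms in auto)
    fix s assume "s \<in> {0..tau}"
    then have "tau - s \<ge> 0" by simp
    then show "0 \<le> \<nu> * exp (\<delta> * s) * bd_pmf a b (tau - s) n"
      using bd_nonneg[OF assms(2,3)] assms by simp
  qed
next
  case False
  then show ?thesis unfolding clone_intensity_def by simp
qed

lemma pgf_exp:
  fixes \<delta> \<nu> a b N z :: real
  assumes "\<delta> > 0" "\<nu> \<ge> 0" "a > b" "b \<ge> 0" "N \<ge> 1" "0 \<le> z" "z < 1"
  shows "B_pgf \<delta> \<nu> a b N z = exp (integral {0..ln N/\<delta>} (\<lambda>s. \<nu> * exp (\<delta> * s) * Gf a b (ln N/\<delta>-s) z)
            - integral {0..ln N/\<delta>} (\<lambda>s. \<nu> * exp (\<delta> * s)))"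
proof -
  define tau where "tau = ln N / \<delta>"
  have tau0: "tau \<ge> 0" using assms unfolding tau_def by simp
  define Lam where "Lam = integral {0..tau} (\<lambda>s. \<nu> * exp (\<delta> * s))"
  define c where "c = clone_intensity \<delta> \<nu> a b tau"
  define CF where "CF w = integral {0..tau} (\<lambda>s. \<nu> * exp (\<delta> * s) * Gf a b (tau-s) w)" for w
  have cs: "\<And>w. 0 \<le> w \<Longrightarrow> w < 1 \<Longrightarrow> (\<lambda>n. c n * w^n) sums CF w"
    unfolding c_def CF_def using clone_sums(2) assms tau0 by simp
  have cnn: "\<And>n. c n \<ge> 0" unfolding c_def using clone_nonneg assms by simp
  define f where "f k m = exp(-Lam)/fact k * conv_pow c k m * z^m" for k m
  have fnn: "\<And>k m. f k m \<ge> 0" unfolding f_def using conv_pow_nonneg[OF cnn] assms by simp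
  have rows: "\<And>k. (\<lambda>m. f k m) sums (exp(-Lam)/fact k * CF z ^ k)"
  proof -
    fix k
    from sums_mult[OF conv_pow_sums[OF cnn assms(6) cs[OF assms(6,7)]], of "exp(-Lam)/fact k"]
    show "(\<lambda>m. f k m) sums (exp(-Lam)/fact k * CF z ^ k)" unfolding f_def by (simp add: mult.assoc)
  qed
  have expser: "\<And>x. (\<lambda>k. exp(-Lam)/fact k * x ^ k) sums (exp(-Lam) * exp x)"
  proof -
    fix x :: real
    from sums_mult[OF exp_converges[of x], of "exp(-Lam)"]
    show "(\<lambda>k. exp(-Lam)/fact k * x ^ k) sums (exp(-Lam) * exp x)"
      by (simp add: field_simps)
  qed
  have zsum: "\<And>m. summable (\<lambda>k. exp(-Lam)/fact k * conv_pow c k m)"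
  proof -
    fix m
    define H where "H = CF (1/2)"
    have bnd: "\<And>k. conv_pow c k m \<le> 2^m * H^k"
    proof -
      fix k
      have s2: "(\<lambda>m. conv_pow c k m * (1/2)^m) sums H^k"
        unfolding H_def by (rule conv_pow_sums[OF cnn _ cs]) auto
      have "(\<Sum>i\<in>{m}. conv_pow c k i * (1/2)^i) \<le> (\<Sum>i. conv_pow c k i * (1/2)^i)"
        using s2 conv_pow_nonneg[OF cnn] by (intro sum_le_suminf) (auto simp: sums_summable)
      then have le: "conv_pow c k m * (1/2)^m \<le> H^k" using s2 by (simp add: sums_iff)
      have "(1/2::real)^m * 2^m = 1" by (simp add: power_mult_distrib[symmetric])
      then have "conv_pow c k m = (conv_pow c k m * (1/2)^m) * 2^m" by (simp add: mult.assoc)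
      also have "\<dots> \<le> H^k * 2^m" using le by (intro mult_right_mono) auto
      finally show "conv_pow c k m \<le> 2^m * H^k" by (simp add: mult.commute)
    qed
    have "summable (\<lambda>k. 2^m * (exp(-Lam)/fact k * H ^ k))"
      using expser[of H] by (intro summable_mult) (simp add: sums_summable)
    then show "summable (\<lambda>k. exp(-Lam)/fact k * conv_pow c k m)"
    proof (rule summable_comparison_test'[where N=0])
      fix k :: nat
      have "exp(-Lam)/fact k * conv_pow c k m \<le> exp(-Lam)/fact k * (2^m * H^k)"
        using bnd by (intro mult_left_mono) auto
      moreover have "exp(-Lam)/fact k * conv_pow c k m \<ge> 0" using conv_pow_nonneg[OF cnn] by simp
      ultimately show "norm (exp(-Lam)/fact k * conv_pow c k m) \<le> 2^m * (exp(-Lam)/fact k * H ^ k)"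
        by (simp add: mult_ac)
    qed
  qed
  have cols: "\<And>m. summable (\<lambda>k. f k m)" unfolding f_def using zsum by (rule summable_mult2)
  have sw: "(\<lambda>m. \<Sum>k. f k m) sums (exp(-Lam) * exp (CF z))"
    by (rule nonneg_swap[OF fnn rows expser cols])
  have eq: "\<And>m. (\<Sum>k. f k m) = B_pmf \<delta> \<nu> a b N m * z^m"
  proof -
    fix m
    have "B_pmf \<delta> \<nu> a b N m = (\<Sum>k. exp(-Lam)/fact k * conv_pow c k m)"
      unfolding B_pmf_def Let_def tau_def[symmetric] Lam_def c_def ..
    then show "(\<Sum>k. f k m) = B_pmf \<delta> \<nu> a b N m * z^m"
      unfolding f_def using suminf_mult2[OF zsum[of m], of "z^m"] by simp
  qed
  have "B_pgf \<delta> \<nu> a b N z = exp(-Lam) * exp (CF z)"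
    using sw unfolding eq B_pgf_def by (simp add: sums_iff)
  also have "\<dots> = exp (CF z - Lam)" by (simp add: exp_diff exp_minus field_simps)
  finally show ?thesis unfolding CF_def Lam_def tau_def .
qed

lemma pgf_closed:
  fixes \<nu> a b N z :: real
  assumes nu: "\<nu> > 0" and ab: "a > b" and b0: "b \<ge> 0" and N1: "N > 1" and z0: "0 \<le> z" and z1: "z < 1"
  shows "(b/a - z)/(1-z) \<noteq> 0 \<Longrightarrow> B_pgf (a-b) \<nu> a b N z
           = exp ((\<nu>*N/(a*((b/a - z)/(1-z)))) * (ln(1-(b/a - z)/(1-z)) - ln(1-(b/a - z)/(1-z)/N)))"
    and "(b/a - z)/(1-z) = 0 \<Longrightarrow> B_pgf (a-b) \<nu> a b N z = exp (-(\<nu>*N/a)*(1-1/N))"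
proof -
  define xi where "xi = (b/a - z)/(1-z)"
  define d where "d = a - b"
  define tau where "tau = ln N / d"
  have d0: "d > 0" using ab d_def by simp
  have a0: "a > 0" using ab b0 by simp
  have tau0: "tau \<ge> 0" using N1 d0 tau_def by simp
  have dtau: "d * tau = ln N" using d0 tau_def by simp
  have expdtau: "exp (d * tau) = N" using dtau N1 by simp
  have xi1: "xi < 1"
  proof -
    have "b/a < 1" using ab a0 by simp
    then have "b/a - z < 1 - z" by simp
    then show ?thesis unfolding xi_def using z1 by (simp add: pos_divide_less_eq)
  qed
  define X where "X s = exp (d*(s - tau))" for s
  define E where "E s = exp (d*(tau - s))" for s
  have XE: "\<And>s. X s * E s = 1" unfolding X_def E_def by (simp add: exp_add[symmetric] algebra_simps)
  have Xpos: "\<And>s. X s > 0" unfolding X_def by simp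
  have Xle: "\<And>s. s \<le> tau \<Longrightarrow> X s \<le> 1" unfolding X_def using d0
    by (simp add: mult_nonneg_nonpos)
  have pos: "\<And>s. s \<le> tau \<Longrightarrow> 1 - xi * X s > 0"
  proof -
    fix s assume "s \<le> tau"
    then have "X s \<le> 1" by (rule Xle)
    show "1 - xi * X s > 0"
    proof (cases "xi \<le> 0")
      case True
      have "xi * X s \<le> 0" using True Xpos[of s] by (intro mult_nonpos_nonneg) auto
      then show ?thesis by simp
    next
      case False
      then have "xi * X s \<le> xi * 1" using \<open>X s \<le> 1\<close> by (intro mult_left_mono) auto
      then show ?thesis using xi1 by simp
    qed
  qed
  have X0: "X 0 = 1/N" unfolding X_def using expdtau
    by (simp add: exp_minus inverse_eq_divide)
  have Xtau: "X tau = 1" unfolding X_def by simp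
  define nice where "nice s = \<nu> * d * N / (a * (E s - xi))" for s
  have Egt: "\<And>s. s \<le> tau \<Longrightarrow> E s - xi > 0"
  proof -
    fix s assume "s \<le> tau"
    then have "E s \<ge> 1" unfolding E_def using d0 by simp
    then show "E s - xi > 0" using xi1 by simp
  qed
  have pw: "\<And>s. s \<in> {0..tau} \<Longrightarrow> \<nu> * exp (d * s) * Gf a b (tau - s) z = \<nu> * exp (d * s) - nice s"
  proof -
    fix s assume s: "s \<in> {0..tau}"
    have eN: "exp (d * s) * E s = N" unfolding E_def using expdtau by (simp add: exp_add[symmetric] algebra_simps)
    have G: "Gf a b (tau - s) z = 1 - d/a * E s / (E s - xi)"
      unfolding Gf_def E_def xi_def d_def ..
    have Ex: "E s - xi \<noteq> 0" using Egt[of s] s by simp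
    have "\<nu> * exp (d * s) * Gf a b (tau - s) z = \<nu> * exp (d * s) - \<nu> * d * (exp (d * s) * E s) / (a * (E s - xi))"
      unfolding G using a0 Ex by (simp add: field_simps)
    then show "\<nu> * exp (d * s) * Gf a b (tau - s) z = \<nu> * exp (d * s) - nice s"
      unfolding nice_def eN .
  qed
  have Lint: "(\<lambda>s. \<nu> * exp (d * s)) integrable_on {0..tau}"
    by (intro integrable_continuous_interval continuous_intros)
  have pgf: "B_pgf (a-b) \<nu> a b N z = exp (- integral {0..tau} nice)" if nint: "nice integrable_on {0..tau}"
  proof -
    have "integral {0..tau} (\<lambda>s. \<nu> * exp (d * s) * Gf a b (tau - s) z)
        = integral {0..tau} (\<lambda>s. \<nu> * exp (d * s) - nice s)"
      by (rule integral_cong) (rule pw)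
    also have "\<dots> = integral {0..tau} (\<lambda>s. \<nu> * exp (d * s)) - integral {0..tau} nice"
      by (rule integral_diff[OF Lint nint])
    finally have "integral {0..tau} (\<lambda>s. \<nu> * exp (d * s) * Gf a b (tau - s) z)
        - integral {0..tau} (\<lambda>s. \<nu> * exp (d * s)) = - integral {0..tau} nice" by simp
    moreover have "B_pgf (a-b) \<nu> a b N z = exp (integral {0..tau} (\<lambda>s. \<nu> * exp (d * s) * Gf a b (tau - s) z)
        - integral {0..tau} (\<lambda>s. \<nu> * exp (d * s)))"
      unfolding tau_def d_def by (rule pgf_exp) (use d0 nu ab b0 N1 z0 z1 d_def in auto)
    ultimately show ?thesis by simp
  qed
  have ftc: "(nice has_integral (F tau - F 0)) {0..tau}"
    if der: "\<And>s. s \<in> {0..tau} \<Longrightarrow> (F has_real_derivative nice s) (at s)" for F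
  proof (rule fundamental_theorem_of_calculus[OF tau0])
    fix s assume "s \<in> {0..tau}"
    from der[OF this] show "(F has_vector_derivative nice s) (at s within {0..tau})"
      by (simp add: has_real_derivative_iff_has_vector_derivative[symmetric] has_field_derivative_at_within)
  qed
  have dX: "\<And>s. (X has_real_derivative (X s * d)) (at s)"
    unfolding X_def by (auto intro!: derivative_eq_intros)
  show "(b/a - z)/(1-z) \<noteq> 0 \<Longrightarrow> B_pgf (a-b) \<nu> a b N z
           = exp ((\<nu>*N/(a*((b/a - z)/(1-z)))) * (ln(1-(b/a - z)/(1-z)) - ln(1-(b/a - z)/(1-z)/N)))"
  proof -
    assume "(b/a - z)/(1-z) \<noteq> 0"
    then have xi0: "xi \<noteq> 0" unfolding xi_def .
    define F where "F s = - (\<nu>*N/(a*xi)) * ln (1 - xi * X s)" for s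
    have "(F has_real_derivative nice s) (at s)" if s: "s \<in> {0..tau}" for s
    proof -
      have p: "1 - xi * X s > 0" using pos s by simp
      have d1: "((\<lambda>s. 1 - xi * X s) has_real_derivative (- (xi * (X s * d)))) (at s)"
        by (auto intro!: derivative_eq_intros dX)
      have d2: "((\<lambda>s. ln (1 - xi * X s)) has_real_derivative (1 / (1 - xi * X s) * (- (xi * (X s * d))))) (at s)"
        by (rule DERIV_chain2[OF DERIV_ln_divide[OF p] d1])
      have d3: "(F has_real_derivative (- (\<nu>*N/(a*xi)) * (1 / (1 - xi * X s) * (- (xi * (X s * d)))))) (at s)"
        unfolding F_def by (rule DERIV_cmult[OF d2])
      have Es: "E s = 1 / X s" using XE[of s] Xpos[of s] by (simp add: field_simps)
      have "- (\<nu>*N/(a*xi)) * (1 / (1 - xi * X s) * (- (xi * (X s * d)))) = nice s"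
        unfolding nice_def Es using xi0 a0 p Xpos[of s] by (simp add: field_simps)
      then show ?thesis using d3 by simp
    qed
    then have hi: "(nice has_integral (F tau - F 0)) {0..tau}" by (rule ftc)
    then have "B_pgf (a-b) \<nu> a b N z = exp (- (F tau - F 0))"
      using pgf[OF has_integral_integrable[OF hi]] integral_unique[OF hi] by simp
    also have "- (F tau - F 0) = (\<nu>*N/(a*xi)) * (ln(1-xi) - ln(1-xi/N))"
      unfolding F_def Xtau X0 by (simp add: algebra_simps)
    finally show ?thesis unfolding xi_def .
  qed
  show "(b/a - z)/(1-z) = 0 \<Longrightarrow> B_pgf (a-b) \<nu> a b N z = exp (-(\<nu>*N/a)*(1-1/N))"
  proof -
    assume "(b/a - z)/(1-z) = 0"
    then have xi0: "xi = 0" unfolding xi_def .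
    define F where "F s = (\<nu>*N/a) * X s" for s
    have "(F has_real_derivative nice s) (at s)" if s: "s \<in> {0..tau}" for s
    proof -
      have d3: "(F has_real_derivative ((\<nu>*N/a) * (X s * d))) (at s)"
        unfolding F_def by (rule DERIV_cmult[OF dX])
      have Es: "E s = 1 / X s" using XE[of s] Xpos[of s] by (simp add: field_simps)
      have "(\<nu>*N/a) * (X s * d) = nice s"
        unfolding nice_def Es xi0 using a0 Xpos[of s] by (simp add: field_simps)
      then show ?thesis using d3 by simp
    qed
    then have hi: "(nice has_integral (F tau - F 0)) {0..tau}" by (rule ftc)
    then have "B_pgf (a-b) \<nu> a b N z = exp (- (F tau - F 0))"
      using pgf[OF has_integral_integrable[OF hi]] integral_unique[OF hi] by simp
    also have "- (F tau - F 0) = -(\<nu>*N/a)*(1-1/N)"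
      unfolding F_def Xtau X0 using N1 a0 by (simp add: field_simps)
    finally show ?thesis .
  qed
qed

lemma powr_forms:
  fixes x w K :: real
  assumes "x > 0" "w > 0"
  shows "(x/w) powr K = exp (K * (ln x - ln w))" and "(w/x) powr (-K) = exp (K * (ln x - ln w))"
  using assms by (simp_all add: powr_def ln_div algebra_simps)

theorem mainTheorem5:
  fixes \<delta> \<nu> \<alpha> \<beta> N :: real
  assumes "\<delta> > 0" and "\<nu> > 0" and "\<alpha> > \<beta>" and "\<beta> \<ge> 0" and "N > 1"
    and gamma1: "\<delta> = \<alpha> - \<beta>"
  shows "(\<forall>z. 0 \<le> z \<and> z < 1 \<longrightarrow>
           (let q = \<beta> / \<alpha>; \<mu> = \<nu> / \<alpha>; \<theta> = N * \<mu>; \<phi> = 1 - 1 / N;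
                \<xi> = (q - z) / (1 - z); y = (z - q) / (1 - q)
            in (z \<noteq> q \<longrightarrow>
                  B_pgf \<delta> \<nu> \<alpha> \<beta> N z = ((1 - \<xi>) / (1 - \<xi> / N)) powr (N * \<mu> / \<xi>) \<and>
                  B_pgf \<delta> \<nu> \<alpha> \<beta> N z = (1 - \<phi> * y) powr (\<theta> * (1 - y) / y))
             \<and> (z = q \<longrightarrow> B_pgf \<delta> \<nu> \<alpha> \<beta> N z = exp (- \<theta> * \<phi>)))) \<and>
         (\<beta> > 0 \<longrightarrow>
           (let q = \<beta> / \<alpha>; \<theta> = N * (\<nu> / \<alpha>); \<phi> = 1 - 1 / N
            in B_pmf \<delta> \<nu> \<alpha> \<beta> N 0 = (1 + q * \<phi> / (1 - q)) powr (- \<theta> / q)))"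
proof -
  have a0: "\<alpha> > 0" using assms by simp
  have q1: "\<beta>/\<alpha> < 1" using assms a0 by simp
  have pc1: "\<And>z. 0 \<le> z \<Longrightarrow> z < 1 \<Longrightarrow> (\<beta>/\<alpha> - z)/(1-z) \<noteq> 0 \<Longrightarrow> B_pgf \<delta> \<nu> \<alpha> \<beta> N z
           = exp ((\<nu>*N/(\<alpha>*((\<beta>/\<alpha> - z)/(1-z)))) * (ln(1-(\<beta>/\<alpha> - z)/(1-z)) - ln(1-(\<beta>/\<alpha> - z)/(1-z)/N)))"
    unfolding gamma1 by (rule pgf_closed(1)) (use assms in auto)
  have pc2: "\<And>z. 0 \<le> z \<Longrightarrow> z < 1 \<Longrightarrow> (\<beta>/\<alpha> - z)/(1-z) = 0 \<Longrightarrow> B_pgf \<delta> \<nu> \<alpha> \<beta> N z = exp (-(\<nu>*N/\<alpha>)*(1-1/N))"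
    unfolding gamma1 by (rule pgf_closed(2)) (use assms in auto)
  have P1: "B_pgf \<delta> \<nu> \<alpha> \<beta> N z = ((1 - (\<beta>/\<alpha> - z)/(1-z)) / (1 - (\<beta>/\<alpha> - z)/(1-z) / N)) powr (N * (\<nu>/\<alpha>) / ((\<beta>/\<alpha> - z)/(1-z)))
      \<and> B_pgf \<delta> \<nu> \<alpha> \<beta> N z = (1 - (1 - 1/N) * ((z - \<beta>/\<alpha>)/(1 - \<beta>/\<alpha>))) powr
            (N * (\<nu>/\<alpha>) * (1 - (z - \<beta>/\<alpha>)/(1 - \<beta>/\<alpha>)) / ((z - \<beta>/\<alpha>)/(1 - \<beta>/\<alpha>)))"
    if z0: "0 \<le> z" and z1: "z < 1" and zq: "z \<noteq> \<beta>/\<alpha>" for z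
  proof -
    define q where "q = \<beta>/\<alpha>"
    define xi where "xi = (q - z)/(1-z)"
    have q1': "q < 1" using q1 q_def by simp
    have d1: "1 - z > 0" using z1 by simp
    have qz: "q - z \<noteq> 0" "z - q \<noteq> 0" using zq q_def by auto
    have xi0: "xi \<noteq> 0" unfolding xi_def using qz d1 by simp
    have xi1: "xi < 1"
    proof -
      have "q - z < 1 - z" using q1' by simp
      then show ?thesis unfolding xi_def using d1 by (simp add: pos_divide_less_eq)
    qed
    have xp1: "1 - xi > 0" using xi1 by simp
    have xp2: "1 - xi/N > 0"
    proof -
      have "xi < N" using xi1 assms by simp
      then have "xi/N < 1" using assms by (simp add: pos_divide_less_eq)
      then show ?thesis by simp
    qed
    have B: "B_pgf \<delta> \<nu> \<alpha> \<beta> N z = exp ((N * (\<nu>/\<alpha>) / xi) * (ln (1-xi) - ln (1-xi/N)))"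
    proof -
      have "B_pgf \<delta> \<nu> \<alpha> \<beta> N z = exp ((\<nu>*N/(\<alpha>*xi)) * (ln(1-xi) - ln(1-xi/N)))"
        using pc1[OF z0 z1] xi0 unfolding xi_def q_def by simp
      moreover have "\<nu>*N/(\<alpha>*xi) = N * (\<nu>/\<alpha>) / xi" by simp
      ultimately show ?thesis by simp
    qed
    have eqb: "1 - (1 - 1/N) * ((z - q)/(1 - q)) = (1 - xi/N) / (1 - xi)"
    proof -
      have e1: "1 - xi = (1 - q)/(1 - z)" unfolding xi_def using d1 by (simp add: field_simps)
      have e2: "1 - xi/N = (N*(1-z) - (q - z))/(N*(1-z))" unfolding xi_def using d1 assms
        by (simp add: field_simps)
      have e3: "1 - (1 - 1/N) * ((z - q)/(1 - q)) = (N*(1-q) - (N - 1)*(z - q))/(N*(1-q))"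
        using q1' assms by (simp add: field_simps)
      have "N*(1-q) - (N - 1)*(z - q) = N*(1-z) - (q - z)" by (simp add: algebra_simps)
      note AB = this
      have nz: "1 - z \<noteq> 0" "1 - q \<noteq> 0" "N \<noteq> 0" using d1 q1' assms by auto
      have gen: "\<And>x u v. u \<noteq> 0 \<Longrightarrow> v \<noteq> 0 \<Longrightarrow> (x / (N * u)) / (v / u) = x / (N * v)"
        using nz(3) by (simp add: field_simps)
      show ?thesis unfolding e1 e2 e3 AB by (rule gen[symmetric, OF nz(1,2)])
    qed
    have eqe: "N * (\<nu>/\<alpha>) * (1 - (z - q)/(1 - q)) / ((z - q)/(1 - q)) = - (N * (\<nu>/\<alpha>) / xi)"
    proof -
      have r1: "1 - (z - q)/(1 - q) = (1 - z)/(1 - q)" using q1' by (simp add: field_simps)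
      have g3: "\<And>A u v w::real. u \<noteq> 0 \<Longrightarrow> w \<noteq> 0 \<Longrightarrow> A * (v / u) / (w / u) = A * (v / w)"
        by (simp add: field_simps)
      have s1: "N * (\<nu>/\<alpha>) * ((1 - z)/(1 - q)) / ((z - q)/(1 - q)) = N * (\<nu>/\<alpha>) * ((1 - z)/(z - q))"
        by (rule g3) (use q1' qz in auto)
      have g4: "\<And>A u w v::real. u \<noteq> 0 \<Longrightarrow> w \<noteq> 0 \<Longrightarrow> v = - w \<Longrightarrow> A * (u / w) = - (A / (v / u))"
        by (simp add: field_simps)
      have s2: "N * (\<nu>/\<alpha>) * ((1 - z)/(z - q)) = - (N * (\<nu>/\<alpha>) / ((q - z)/(1 - z)))"
        by (rule g4) (use qz d1 in auto)
      show ?thesis unfolding r1 s1 s2 xi_def by (rule refl)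
    qed
    show ?thesis
      unfolding q_def[symmetric] xi_def[symmetric] eqb eqe B
      using powr_forms[OF xp1 xp2] by simp
  qed
  have P2: "B_pgf \<delta> \<nu> \<alpha> \<beta> N z = exp (- (N * (\<nu>/\<alpha>)) * (1 - 1/N))"
    if z0: "0 \<le> z" and z1: "z < 1" and zq: "z = \<beta>/\<alpha>" for z
  proof -
    have "(\<beta>/\<alpha> - z)/(1-z) = 0" using zq by simp
    from pc2[OF z0 z1 this] show ?thesis by (simp add: algebra_simps)
  qed
  have P3: "B_pmf \<delta> \<nu> \<alpha> \<beta> N 0 = (1 + \<beta>/\<alpha> * (1 - 1/N) / (1 - \<beta>/\<alpha>)) powr (- (N * (\<nu>/\<alpha>)) / (\<beta>/\<alpha>))"
    if bp: "\<beta> > 0"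
  proof -
    have q0: "\<beta>/\<alpha> > 0" using bp a0 by simp
    have "B_pmf \<delta> \<nu> \<alpha> \<beta> N 0 = B_pgf \<delta> \<nu> \<alpha> \<beta> N 0"
      unfolding B_pgf_def by simp
    also have "\<dots> = (1 - (1 - 1/N) * ((0 - \<beta>/\<alpha>)/(1 - \<beta>/\<alpha>))) powr
            (N * (\<nu>/\<alpha>) * (1 - (0 - \<beta>/\<alpha>)/(1 - \<beta>/\<alpha>)) / ((0 - \<beta>/\<alpha>)/(1 - \<beta>/\<alpha>)))"
      by (rule conjunct2[OF P1]) (use q0 in auto)
    also have "1 - (1 - 1/N) * ((0 - \<beta>/\<alpha>)/(1 - \<beta>/\<alpha>)) = 1 + \<beta>/\<alpha> * (1 - 1/N) / (1 - \<beta>/\<alpha>)"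
    proof -
      have gen2: "\<And>q p::real. 1 - q \<noteq> 0 \<Longrightarrow> 1 - p * ((0 - q)/(1 - q)) = 1 + q * p/(1 - q)"
        by (simp add: field_simps)
      show ?thesis by (rule gen2) (use q1 assms in simp)
    qed
    also have "N * (\<nu>/\<alpha>) * (1 - (0 - \<beta>/\<alpha>)/(1 - \<beta>/\<alpha>)) / ((0 - \<beta>/\<alpha>)/(1 - \<beta>/\<alpha>)) = - (N * (\<nu>/\<alpha>)) / (\<beta>/\<alpha>)"
    proof -
      have g5: "\<And>A q::real. q \<noteq> 0 \<Longrightarrow> 1 - q \<noteq> 0 \<Longrightarrow> A * (1 - (0 - q)/(1 - q)) / ((0 - q)/(1 - q)) = - A / q"
        by (simp add: field_simps)
      show ?thesis by (rule g5) (use q0 q1 in linarith)+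
    qed
    finally show ?thesis .
  qed
  show ?thesis unfolding Let_def
    apply (intro conjI allI impI)
    subgoal using P1 by blast
    subgoal using P1 by blast
    subgoal using P2 by blast
    subgoal using P3 by blast
    done
qed

end
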